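(* Let $S^0$ be an inverse semigroup with semilattice of idempotents $E^0$ and let $I$ be a left regular band having $E^0$ as a semilattice transversal. Suppose there is a left action $(x,e)\mapsto x\ast e$ of $S^0$ on $I$ (so $(xy)\ast e=x\ast(y\ast e)$) with $x\ast(ef)=(x\ast e)(x\ast f)$ for all $x\in S^0$, $e,f\in I$, satisfying: 1. for all $x,y\in S^0$, $x\ast(yy^{-1})=(xy)(xy)^{-1}$; 2. for all $x\in S^0$, $e\in I$, $(xx^{-1})\ast e=(xx^{-1})e$. Define on $W=\{(e,x)\in I\times S^0: e\in L_{xx^{-1}}\}$ the multiplication $(e,x)(g,y)=(e(x\ast g),xy)$. Then $W$ is a left inverse semigroup with an inverse transversal isomorphic to $S^0$, and $I(W)\cong I$. Moreover every left inverse semigroup with an inverse transversal can be constructed (up to isomorphism) in this way.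
   Context: $V(x)$ denotes the set of inverses of $x$. A left inverse semigroup is a regular semigroup in which each $\mathcal{R}$-class contains a unique idempotent (equivalently its idempotents form a left regular band). An inverse subsemigroup $T^0$ of a regular semigroup $T$ is an inverse transversal if $|V(x)\cap T^0|=1$ for all $x\in T$; writing $x^0$ for this element, $I(T)=\{xx^0:x\in T\}$. A left regular band satisfies $xyx=xy$; $E^0$ is a semilattice transversal of $I$ if it is a subsemilattice of $I$ and each element of $I$ has exactly one inverse in $E^0$. For $x\in E^0$, $L_x$ is the $\mathcal{L}$-class of $x$ in $I$. *)

theory Defs
  imports Main
begin

definition semigroup_on :: "'a set \<Rightarrow> ('a \<Rightarrow> 'a \<Rightarrow> 'a) \<Rightarrow> bool" where
  "semigroup_on S m \<longleftrightarrow> (\<forall>x\<in>S. \<forall>y\<in>S. m x y \<in> S) \<and>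
     (\<forall>x\<in>S. \<forall>y\<in>S. \<forall>z\<in>S. m (m x y) z = m x (m y z))"

definition inverses :: "'a set \<Rightarrow> ('a \<Rightarrow> 'a \<Rightarrow> 'a) \<Rightarrow> 'a \<Rightarrow> 'a set" where
  "inverses S m x = {y \<in> S. m (m x y) x = x \<and> m (m y x) y = y}"

definition regular_sg :: "'a set \<Rightarrow> ('a \<Rightarrow> 'a \<Rightarrow> 'a) \<Rightarrow> bool" where
  "regular_sg S m \<longleftrightarrow> semigroup_on S m \<and> (\<forall>x\<in>S. inverses S m x \<noteq> {})"

definition idems :: "'a set \<Rightarrow> ('a \<Rightarrow> 'a \<Rightarrow> 'a) \<Rightarrow> 'a set" where
  "idems S m = {e \<in> S. m e e = e}"

definition inverse_sg :: "'a set \<Rightarrow> ('a \<Rightarrow> 'a \<Rightarrow> 'a) \<Rightarrow> bool" where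
  "inverse_sg S m \<longleftrightarrow> semigroup_on S m \<and> (\<forall>x\<in>S. \<exists>!y. y \<in> inverses S m x)"

definition sg_inv :: "'a set \<Rightarrow> ('a \<Rightarrow> 'a \<Rightarrow> 'a) \<Rightarrow> 'a \<Rightarrow> 'a" where
  "sg_inv S m x = (THE y. y \<in> inverses S m x)"

text \<open>Green's relations: x R y iff xS^1 = yS^1; x L y iff S^1x = S^1y.\<close>
definition R_rel :: "'a set \<Rightarrow> ('a \<Rightarrow> 'a \<Rightarrow> 'a) \<Rightarrow> 'a \<Rightarrow> 'a \<Rightarrow> bool" where
  "R_rel S m x y \<longleftrightarrow> x \<in> S \<and> y \<in> S \<and>
     (x = y \<or> (\<exists>s\<in>S. x = m y s)) \<and> (y = x \<or> (\<exists>s\<in>S. y = m x s))"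

definition L_rel :: "'a set \<Rightarrow> ('a \<Rightarrow> 'a \<Rightarrow> 'a) \<Rightarrow> 'a \<Rightarrow> 'a \<Rightarrow> bool" where
  "L_rel S m x y \<longleftrightarrow> x \<in> S \<and> y \<in> S \<and>
     (x = y \<or> (\<exists>s\<in>S. x = m s y)) \<and> (y = x \<or> (\<exists>s\<in>S. y = m s x))"

definition L_class :: "'a set \<Rightarrow> ('a \<Rightarrow> 'a \<Rightarrow> 'a) \<Rightarrow> 'a \<Rightarrow> 'a set" where
  "L_class S m x = {y. L_rel S m y x}"

definition left_inverse_sg :: "'a set \<Rightarrow> ('a \<Rightarrow> 'a \<Rightarrow> 'a) \<Rightarrow> bool" where
  "left_inverse_sg S m \<longleftrightarrow> regular_sg S m \<and>
     (\<forall>x\<in>S. \<exists>!e. e \<in> idems S m \<and> R_rel S m x e)"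

definition inverse_subsg :: "'a set \<Rightarrow> 'a set \<Rightarrow> ('a \<Rightarrow> 'a \<Rightarrow> 'a) \<Rightarrow> bool" where
  "inverse_subsg T0 T m \<longleftrightarrow> T0 \<subseteq> T \<and> inverse_sg T0 m"

definition inverse_transversal :: "'a set \<Rightarrow> ('a \<Rightarrow> 'a \<Rightarrow> 'a) \<Rightarrow> 'a set \<Rightarrow> bool" where
  "inverse_transversal T m T0 \<longleftrightarrow> regular_sg T m \<and> inverse_subsg T0 T m \<and>
     (\<forall>x\<in>T. \<exists>!y. y \<in> inverses T m x \<inter> T0)"

definition trans_inv :: "'a set \<Rightarrow> ('a \<Rightarrow> 'a \<Rightarrow> 'a) \<Rightarrow> 'a set \<Rightarrow> 'a \<Rightarrow> 'a" where
  "trans_inv T m T0 x = (THE y. y \<in> inverses T m x \<inter> T0)"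

definition I_set :: "'a set \<Rightarrow> ('a \<Rightarrow> 'a \<Rightarrow> 'a) \<Rightarrow> 'a set \<Rightarrow> 'a set" where
  "I_set T m T0 = {m x (trans_inv T m T0 x) | x. x \<in> T}"

definition left_regular_band :: "'a set \<Rightarrow> ('a \<Rightarrow> 'a \<Rightarrow> 'a) \<Rightarrow> bool" where
  "left_regular_band I m \<longleftrightarrow> semigroup_on I m \<and> (\<forall>x\<in>I. m x x = x) \<and>
     (\<forall>x\<in>I. \<forall>y\<in>I. m (m x y) x = m x y)"

definition semilattice_transversal :: "'a set \<Rightarrow> 'a set \<Rightarrow> ('a \<Rightarrow> 'a \<Rightarrow> 'a) \<Rightarrow> bool" where
  "semilattice_transversal E I m \<longleftrightarrow> E \<subseteq> I \<and> (\<forall>e\<in>E. \<forall>f\<in>E. m e f \<in> E) \<and>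
     (\<forall>e\<in>E. m e e = e) \<and> (\<forall>e\<in>E. \<forall>f\<in>E. m e f = m f e) \<and>
     (\<forall>x\<in>I. \<exists>!y. y \<in> inverses I m x \<inter> E)"

definition sg_iso :: "('a \<Rightarrow> 'b) \<Rightarrow> 'a set \<Rightarrow> ('a \<Rightarrow> 'a \<Rightarrow> 'a) \<Rightarrow> 'b set \<Rightarrow> ('b \<Rightarrow> 'b \<Rightarrow> 'b) \<Rightarrow> bool" where
  "sg_iso f A mA B mB \<longleftrightarrow> bij_betw f A B \<and> (\<forall>x\<in>A. \<forall>y\<in>A. f (mA x y) = mB (f x) (f y))"

definition isomorphic :: "'a set \<Rightarrow> ('a \<Rightarrow> 'a \<Rightarrow> 'a) \<Rightarrow> 'b set \<Rightarrow> ('b \<Rightarrow> 'b \<Rightarrow> 'b) \<Rightarrow> bool" where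
  "isomorphic A mA B mB \<longleftrightarrow> (\<exists>f. sg_iso f A mA B mB)"

text \<open>Hypotheses of the construction: S0 inverse semigroup with semilattice of idempotents E0,
  I a left regular band with E0 as semilattice transversal (E0 a subsemilattice of I, so the two
  multiplications agree on E0), a left action act (x * e) of S0 on I by endomorphisms,
  satisfying conditions 1 and 2.\<close>
definition construction_data ::
  "'a set \<Rightarrow> ('a \<Rightarrow> 'a \<Rightarrow> 'a) \<Rightarrow> 'a set \<Rightarrow> ('a \<Rightarrow> 'a \<Rightarrow> 'a) \<Rightarrow> ('a \<Rightarrow> 'a \<Rightarrow> 'a) \<Rightarrow> bool" where
  "construction_data S0 mS I mI act \<longleftrightarrow>
     inverse_sg S0 mS \<and> left_regular_band I mI \<and>
     semilattice_transversal (idems S0 mS) I mI \<and>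
     (\<forall>e\<in>idems S0 mS. \<forall>f\<in>idems S0 mS. mI e f = mS e f) \<and>
     (\<forall>x\<in>S0. \<forall>e\<in>I. act x e \<in> I) \<and>
     (\<forall>x\<in>S0. \<forall>y\<in>S0. \<forall>e\<in>I. act (mS x y) e = act x (act y e)) \<and>
     (\<forall>x\<in>S0. \<forall>e\<in>I. \<forall>f\<in>I. act x (mI e f) = mI (act x e) (act x f)) \<and>
     (\<forall>x\<in>S0. \<forall>y\<in>S0. act x (mS y (sg_inv S0 mS y)) = mS (mS x y) (sg_inv S0 mS (mS x y))) \<and>
     (\<forall>x\<in>S0. \<forall>e\<in>I. act (mS x (sg_inv S0 mS x)) e = mI (mS x (sg_inv S0 mS x)) e)"

definition W_set :: "'a set \<Rightarrow> ('a \<Rightarrow> 'a \<Rightarrow> 'a) \<Rightarrow> 'a set \<Rightarrow> ('a \<Rightarrow> 'a \<Rightarrow> 'a) \<Rightarrow> ('a \<times> 'a) set" where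
  "W_set S0 mS I mI = {(e, x). x \<in> S0 \<and> e \<in> I \<and> e \<in> L_class I mI (mS x (sg_inv S0 mS x))}"

definition W_mult :: "('a \<Rightarrow> 'a \<Rightarrow> 'a) \<Rightarrow> ('a \<Rightarrow> 'a \<Rightarrow> 'a) \<Rightarrow> ('a \<Rightarrow> 'a \<Rightarrow> 'a) \<Rightarrow>
    'a \<times> 'a \<Rightarrow> 'a \<times> 'a \<Rightarrow> 'a \<times> 'a" where
  "W_mult mS mI act p q = (mI (fst p) (act (snd p) (fst q)), mS (snd p) (snd q))"

end

theory Submission
  imports Defs
begin

locale isg =
  fixes S :: "'a set" and m :: "'a \<Rightarrow> 'a \<Rightarrow> 'a" (infixl "\<cdot>" 70)
  assumes inv: "inverse_sg S m"
begin

lemma closed[simp]: "x \<in> S \<Longrightarrow> y \<in> S \<Longrightarrow> x \<cdot> y \<in> S"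
  using inv by (auto simp: inverse_sg_def semigroup_on_def)
lemma assoc[simp]: "x \<in> S \<Longrightarrow> y \<in> S \<Longrightarrow> z \<in> S \<Longrightarrow> (x \<cdot> y) \<cdot> z = x \<cdot> (y \<cdot> z)"
  using inv by (auto simp: inverse_sg_def semigroup_on_def)

abbreviation iv where "iv x \<equiv> sg_inv S m x"

lemma iv_inverses: "x \<in> S \<Longrightarrow> iv x \<in> inverses S m x"
  using inv unfolding inverse_sg_def sg_inv_def by (metis theI')
lemma iv_in[simp]: "x \<in> S \<Longrightarrow> iv x \<in> S"
  using iv_inverses[of x] by (simp add: inverses_def)
lemma iv1[simp]: "x \<in> S \<Longrightarrow> x \<cdot> (iv x \<cdot> x) = x"
  using iv_inverses[of x] by (simp add: inverses_def)
lemma iv2[simp]: "x \<in> S \<Longrightarrow> iv x \<cdot> (x \<cdot> iv x) = iv x"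
  using iv_inverses[of x] by (simp add: inverses_def)
lemma iv1z[simp]: assumes "x \<in> S" "z \<in> S" shows "x \<cdot> (iv x \<cdot> (x \<cdot> z)) = x \<cdot> z"
proof -
  have "x \<cdot> (iv x \<cdot> (x \<cdot> z)) = (x \<cdot> (iv x \<cdot> x)) \<cdot> z" using assms by (simp del: iv1)
  also have "\<dots> = x \<cdot> z" using assms by simp
  finally show ?thesis .
qed
lemma iv2z[simp]: assumes "x \<in> S" "z \<in> S" shows "iv x \<cdot> (x \<cdot> (iv x \<cdot> z)) = iv x \<cdot> z"
proof -
  have "iv x \<cdot> (x \<cdot> (iv x \<cdot> z)) = (iv x \<cdot> (x \<cdot> iv x)) \<cdot> z" using assms by (simp del: iv2)
  also have "\<dots> = iv x \<cdot> z" using assms by simp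
  finally show ?thesis .
qed
lemma iv1': "x \<in> S \<Longrightarrow> (x \<cdot> iv x) \<cdot> x = x" by simp
lemma iv2': "x \<in> S \<Longrightarrow> (iv x \<cdot> x) \<cdot> iv x = iv x" by simp
lemma iv_unique: "x \<in> S \<Longrightarrow> y \<in> S \<Longrightarrow> x \<cdot> (y \<cdot> x) = x \<Longrightarrow> y \<cdot> (x \<cdot> y) = y \<Longrightarrow> y = iv x"
proof -
  assume a: "x \<in> S" "y \<in> S" "x \<cdot> (y \<cdot> x) = x" "y \<cdot> (x \<cdot> y) = y"
  have "y \<in> inverses S m x" using a by (simp add: inverses_def)
  moreover have "iv x \<in> inverses S m x" using a iv_inverses by simp
  moreover have "\<exists>!y. y \<in> inverses S m x" using inv a(1) unfolding inverse_sg_def by simp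
  ultimately show ?thesis by (metis (no_types))
qed
lemma iv_iv[simp]: "x \<in> S \<Longrightarrow> iv (iv x) = x"
  using iv_unique[of "iv x" x] by simp

lemma idemz[simp]: "e \<in> S \<Longrightarrow> e \<cdot> e = e \<Longrightarrow> z \<in> S \<Longrightarrow> e \<cdot> (e \<cdot> z) = e \<cdot> z"
  by (metis assoc)

lemma idem_comm:
  assumes e: "e \<in> S" "e \<cdot> e = e" and f: "f \<in> S" "f \<cdot> f = f"
  shows "e \<cdot> f = f \<cdot> e \<and> (e \<cdot> f) \<cdot> (e \<cdot> f) = e \<cdot> f"
proof -
  have ee: "e \<cdot> (e \<cdot> z) = e \<cdot> z" if "z \<in> S" for z using e that by (metis assoc)
  have ff: "f \<cdot> (f \<cdot> z) = f \<cdot> z" if "z \<in> S" for z using f that by (metis assoc)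
  have idem: "(a \<cdot> b) \<cdot> (a \<cdot> b) = a \<cdot> b"
    if a: "a \<in> S" "a \<cdot> a = a" and b: "b \<in> S" "b \<cdot> b = b" for a b
  proof -
    define x where "x = iv (a \<cdot> b)"
    have xS: "x \<in> S" using a b x_def by simp
    have x1: "a \<cdot> (b \<cdot> (x \<cdot> (a \<cdot> b))) = a \<cdot> b" using a b iv1[of "a\<cdot>b"] xS unfolding x_def[symmetric] by (simp del: iv1)
    have x2: "x \<cdot> (a \<cdot> (b \<cdot> x)) = x" using a b iv2[of "a\<cdot>b"] xS unfolding x_def[symmetric] by (simp del: iv2)
    define g where "g = b \<cdot> (x \<cdot> a)"
    have gS: "g \<in> S" using a b xS g_def by simp
    have "(a \<cdot> b) \<cdot> (g \<cdot> (a \<cdot> b)) = a \<cdot> b"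
    proof -
      have "(a \<cdot> b) \<cdot> (g \<cdot> (a \<cdot> b)) = a \<cdot> ((b \<cdot> b) \<cdot> (x \<cdot> ((a \<cdot> a) \<cdot> b)))"
        using a b xS by (simp add: g_def)
      also have "\<dots> = a \<cdot> b" using a b x1 by (simp add: idemz)
      finally show ?thesis .
    qed
    moreover have "g \<cdot> ((a \<cdot> b) \<cdot> g) = g"
    proof -
      have "g \<cdot> ((a \<cdot> b) \<cdot> g) = b \<cdot> (x \<cdot> ((a \<cdot> a) \<cdot> ((b \<cdot> b) \<cdot> (x \<cdot> a))))"
        using a b xS by (simp add: g_def)
      also have "\<dots> = b \<cdot> ((x \<cdot> (a \<cdot> (b \<cdot> x))) \<cdot> a)" using a b xS by simp
      also have "\<dots> = g" using x2 g_def by simp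
      finally show ?thesis .
    qed
    ultimately have gx: "g = x" using iv_unique[of "a \<cdot> b" g] a b gS x_def by simp
    have "g \<cdot> g = g"
    proof -
      have "g \<cdot> g = b \<cdot> ((x \<cdot> (a \<cdot> (b \<cdot> x))) \<cdot> a)" using a b xS by (simp add: g_def)
      also have "\<dots> = g" using x2 g_def by simp
      finally show ?thesis .
    qed
    hence "x \<cdot> (x \<cdot> x) = x" using gx xS by (metis assoc)
    hence "x = iv x" using iv_unique[of x x] xS by simp
    hence "iv x = a \<cdot> b" using x_def a b by simp
    then show ?thesis using \<open>x = iv x\<close> gx \<open>g \<cdot> g = g\<close> by simp
  qed
  have p1: "(e \<cdot> f) \<cdot> (e \<cdot> f) = e \<cdot> f" using idem e f by blast
  have p2: "(f \<cdot> e) \<cdot> (f \<cdot> e) = f \<cdot> e" using idem e f by blast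
  have "(e \<cdot> f) \<cdot> ((f \<cdot> e) \<cdot> (e \<cdot> f)) = e \<cdot> f"
  proof -
    have "(e \<cdot> f) \<cdot> ((f \<cdot> e) \<cdot> (e \<cdot> f)) = e \<cdot> ((f \<cdot> f) \<cdot> ((e \<cdot> e) \<cdot> f))" using e f by simp
    also have "\<dots> = (e \<cdot> f) \<cdot> (e \<cdot> f)" using e f by simp
    finally show ?thesis using p1 by simp
  qed
  moreover have "(f \<cdot> e) \<cdot> ((e \<cdot> f) \<cdot> (f \<cdot> e)) = f \<cdot> e"
  proof -
    have "(f \<cdot> e) \<cdot> ((e \<cdot> f) \<cdot> (f \<cdot> e)) = f \<cdot> ((e \<cdot> e) \<cdot> ((f \<cdot> f) \<cdot> e))" using e f by simp
    also have "\<dots> = (f \<cdot> e) \<cdot> (f \<cdot> e)" using e f by simp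
    finally show ?thesis using p2 by simp
  qed
  ultimately have "f \<cdot> e = iv (e \<cdot> f)" using iv_unique e f by simp
  moreover have "e \<cdot> f = iv (e \<cdot> f)" using iv_unique[of "e\<cdot>f" "e\<cdot>f"] e f p1
    by (metis assoc closed)
  ultimately show ?thesis using p1 by simp
qed

lemma commz:
  assumes "e \<in> S" "e \<cdot> e = e" "f \<in> S" "f \<cdot> f = f" "z \<in> S"
  shows "e \<cdot> (f \<cdot> z) = f \<cdot> (e \<cdot> z)"
proof -
  have "e \<cdot> f = f \<cdot> e" using idem_comm assms by blast
  hence "(e \<cdot> f) \<cdot> z = (f \<cdot> e) \<cdot> z" by simp
  thus ?thesis using assms by simp
qed

lemma idem_mult: "e \<in> S \<Longrightarrow> e \<cdot> e = e \<Longrightarrow> f \<in> S \<Longrightarrow> f \<cdot> f = f \<Longrightarrow> (e \<cdot> f) \<cdot> (e \<cdot> f) = e \<cdot> f"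
  using idem_comm by blast

lemma iv_idem: "e \<in> S \<Longrightarrow> e \<cdot> e = e \<Longrightarrow> iv e = e"
  using iv_unique[of e e] by simp

lemma xiv_idem: "x \<in> S \<Longrightarrow> (x \<cdot> iv x) \<cdot> (x \<cdot> iv x) = x \<cdot> iv x"
  by simp
lemma ivx_idem: "x \<in> S \<Longrightarrow> (iv x \<cdot> x) \<cdot> (iv x \<cdot> x) = iv x \<cdot> x"
  by simp

lemma iv_mult: assumes x: "x \<in> S" and y: "y \<in> S" shows "iv (x \<cdot> y) = iv y \<cdot> iv x"
proof -
  have c: "y \<cdot> (iv y \<cdot> (iv x \<cdot> (x \<cdot> z))) = iv x \<cdot> (x \<cdot> (y \<cdot> (iv y \<cdot> z)))" if "z \<in> S" for z
    using commz[of "y \<cdot> iv y" "iv x \<cdot> x" z] x y that by simp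
  have "(x \<cdot> y) \<cdot> ((iv y \<cdot> iv x) \<cdot> (x \<cdot> y)) = x \<cdot> y"
    using x y c[of y] by simp
  moreover have "(iv y \<cdot> iv x) \<cdot> ((x \<cdot> y) \<cdot> (iv y \<cdot> iv x)) = iv y \<cdot> iv x"
    using x y c[of "iv x", symmetric] by simp
  ultimately show ?thesis by (intro iv_unique[symmetric]) (use x y in simp_all)
qed

end

lemma L_rel_idem:
  assumes "semigroup_on A m" "e \<in> A" "f \<in> A" "m e e = e" "m f f = f"
  shows "L_rel A m e f \<longleftrightarrow> m e f = e \<and> m f e = f"
proof
  assume L: "L_rel A m e f"
  have a: "m (m x y) z = m x (m y z)" if "x \<in> A" "y \<in> A" "z \<in> A" for x y z
    using assms(1) that by (simp add: semigroup_on_def)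
  from L have "e = f \<or> (\<exists>s\<in>A. e = m s f)" by (simp add: L_rel_def)
  hence 1: "m e f = e" using a assms by auto
  from L have "f = e \<or> (\<exists>s\<in>A. f = m s e)" by (simp add: L_rel_def)
  hence "m f e = f" using a assms by auto
  with 1 show "m e f = e \<and> m f e = f" by simp
next
  assume h: "m e f = e \<and> m f e = f"
  hence "\<exists>s\<in>A. e = m s f" "\<exists>s\<in>A. f = m s e" using assms by metis+
  thus "L_rel A m e f" using assms by (auto simp: L_rel_def)
qed

lemma R_rel_idems:
  assumes "semigroup_on A m" "p \<in> A" "q \<in> A" "m p p = p" "m q q = q"
    and "R_rel A m x p" "R_rel A m x q"
  shows "m p q = q \<and> m q p = p"
proof -
  have a: "m (m x y) z = m x (m y z)" if "x \<in> A" "y \<in> A" "z \<in> A" for x y z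
    using assms(1) that by (simp add: semigroup_on_def)
  have gen: "m p q = q" if "p \<in> A" "q \<in> A" "m p p = p" "m q q = q"
    "R_rel A m x p" "R_rel A m x q" for p q
  proof -
    have xA: "x \<in> A" using that(5) by (simp add: R_rel_def)
    from that(5) have "x = p \<or> (\<exists>s\<in>A. x = m p s)" by (simp add: R_rel_def)
    hence px: "m p x = x"
    proof
      assume "x = p" thus ?thesis using that by simp
    next
      assume "\<exists>s\<in>A. x = m p s"
      then obtain s where "s \<in> A" "x = m p s" by blast
      thus ?thesis using a[of p p s] that by simp
    qed
    from that(6) have "q = x \<or> (\<exists>s\<in>A. q = m x s)" by (simp add: R_rel_def)
    thus ?thesis
    proof
      assume "q = x" thus ?thesis using px by simp
    next
      assume "\<exists>s\<in>A. q = m x s"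
      then obtain s where "s \<in> A" "q = m x s" by blast
      thus ?thesis using a[of p x s] px that xA by simp
    qed
  qed
  show ?thesis using gen[of p q] gen[of q p] assms by blast
qed

locale cdata =
  fixes S0 :: "'a set" and mS :: "'a \<Rightarrow> 'a \<Rightarrow> 'a" (infixl "\<cdot>" 70)
    and I :: "'a set" and mI :: "'a \<Rightarrow> 'a \<Rightarrow> 'a" (infixl "\<odot>" 70)
    and act :: "'a \<Rightarrow> 'a \<Rightarrow> 'a"
  assumes cd: "construction_data S0 mS I mI act"
begin

sublocale isg S0 mS using cd by (unfold_locales) (simp add: construction_data_def)

lemma lrb: "left_regular_band I mI" using cd by (simp add: construction_data_def)
lemma sgI: "semigroup_on I mI" using lrb by (simp add: left_regular_band_def)
lemma Iclosed[simp]: "e \<in> I \<Longrightarrow> f \<in> I \<Longrightarrow> e \<odot> f \<in> I"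
  using sgI by (simp add: semigroup_on_def)
lemma Iassoc[simp]: "e \<in> I \<Longrightarrow> f \<in> I \<Longrightarrow> g \<in> I \<Longrightarrow> (e \<odot> f) \<odot> g = e \<odot> (f \<odot> g)"
  using sgI by (simp add: semigroup_on_def)
lemma Iidem[simp]: "e \<in> I \<Longrightarrow> e \<odot> e = e"
  using lrb by (simp add: left_regular_band_def)
lemma Iidemz[simp]: "e \<in> I \<Longrightarrow> z \<in> I \<Longrightarrow> e \<odot> (e \<odot> z) = e \<odot> z"
  by (metis Iassoc Iidem)
lemma lrb1: "e \<in> I \<Longrightarrow> f \<in> I \<Longrightarrow> e \<odot> (f \<odot> e) = e \<odot> f"
  using lrb by (simp add: left_regular_band_def)
lemma st: "semilattice_transversal (idems S0 mS) I mI" using cd by (simp add: construction_data_def)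
lemma E0I: "f \<in> S0 \<Longrightarrow> f \<cdot> f = f \<Longrightarrow> f \<in> I"
  using st by (auto simp: semilattice_transversal_def idems_def)
lemma agree: "e \<in> S0 \<Longrightarrow> e \<cdot> e = e \<Longrightarrow> f \<in> S0 \<Longrightarrow> f \<cdot> f = f \<Longrightarrow> e \<odot> f = e \<cdot> f"
  using cd by (simp add: construction_data_def idems_def)
lemma act_in[simp]: "x \<in> S0 \<Longrightarrow> e \<in> I \<Longrightarrow> act x e \<in> I"
  using cd unfolding construction_data_def by blast
lemma act_comp: "x \<in> S0 \<Longrightarrow> y \<in> S0 \<Longrightarrow> e \<in> I \<Longrightarrow> act (x \<cdot> y) e = act x (act y e)"
  using cd unfolding construction_data_def by blast
lemma act_hom: "x \<in> S0 \<Longrightarrow> e \<in> I \<Longrightarrow> f \<in> I \<Longrightarrow> act x (e \<odot> f) = act x e \<odot> act x f"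
  using cd unfolding construction_data_def by blast
lemma cond1: "x \<in> S0 \<Longrightarrow> y \<in> S0 \<Longrightarrow> act x (y \<cdot> iv y) = (x \<cdot> y) \<cdot> iv (x \<cdot> y)"
  using cd unfolding construction_data_def by blast
lemma cond2: "x \<in> S0 \<Longrightarrow> e \<in> I \<Longrightarrow> act (x \<cdot> iv x) e = (x \<cdot> iv x) \<odot> e"
  using cd unfolding construction_data_def by blast

lemma act_E0: "f \<in> S0 \<Longrightarrow> f \<cdot> f = f \<Longrightarrow> g \<in> I \<Longrightarrow> act f g = f \<odot> g"
  using cond2[of f g] iv_idem[of f] by simp

lemma pI[simp]: "x \<in> S0 \<Longrightarrow> x \<cdot> iv x \<in> I"
  using E0I[of "x \<cdot> iv x"] by simp
lemma pI'[simp]: "x \<in> S0 \<Longrightarrow> iv x \<cdot> x \<in> I"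
  using E0I[of "iv x \<cdot> x"] by simp

abbreviation W where "W \<equiv> W_set S0 mS I mI"
abbreviation mW where "mW \<equiv> W_mult mS mI act"

lemma mW_simp[simp]: "mW (e, x) (g, y) = (e \<odot> act x g, x \<cdot> y)"
  by (simp add: W_mult_def)

lemma inW: "(e, x) \<in> W \<longleftrightarrow> x \<in> S0 \<and> e \<in> I \<and> e \<odot> (x \<cdot> iv x) = e \<and> (x \<cdot> iv x) \<odot> e = x \<cdot> iv x"
proof -
  have "x \<in> S0 \<Longrightarrow> e \<in> I \<Longrightarrow> L_rel I mI e (x \<cdot> iv x) \<longleftrightarrow> e \<odot> (x \<cdot> iv x) = e \<and> (x \<cdot> iv x) \<odot> e = x \<cdot> iv x"
    using L_rel_idem[OF sgI, of e "x \<cdot> iv x"] by simp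
  thus ?thesis by (auto simp: W_set_def L_class_def)
qed

lemma p_r: assumes x: "x \<in> S0" and y: "y \<in> S0"
  shows "(x \<cdot> iv x) \<cdot> ((x \<cdot> y) \<cdot> iv (x \<cdot> y)) = (x \<cdot> y) \<cdot> iv (x \<cdot> y)"
    and "((x \<cdot> y) \<cdot> iv (x \<cdot> y)) \<cdot> (x \<cdot> iv x) = (x \<cdot> y) \<cdot> iv (x \<cdot> y)"
  using x y by (simp_all add: iv_mult)

lemma W_closed: assumes w1: "(e, x) \<in> W" and w2: "(g, y) \<in> W"
  shows "(e \<odot> act x g, x \<cdot> y) \<in> W"
proof -
  define p where "p = x \<cdot> iv x"
  define q where "q = y \<cdot> iv y"
  define r where "r = (x \<cdot> y) \<cdot> iv (x \<cdot> y)"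
  have x: "x \<in> S0" and e: "e \<in> I" and ep: "e \<odot> p = e" and pe: "p \<odot> e = p"
    using w1 by (simp_all add: inW p_def)
  have y: "y \<in> S0" and g: "g \<in> I" and gq: "g \<odot> q = g" and qg: "q \<odot> g = q"
    using w2 by (simp_all add: inW q_def)
  have pq: "p \<in> I" "q \<in> I" using x y by (simp_all add: p_def q_def)
  have rI: "r \<in> I" unfolding r_def by (rule pI) (simp add: x y)
  have rq: "act x q = r" using cond1[OF x y] by (simp add: q_def r_def)
  have ag: "act x g \<in> I" using x g by simp
  have 1: "act x g \<odot> r = act x g"
    using act_hom[OF x g pq(2)] gq rq by simp
  have 2: "r \<odot> act x g = r"
    using act_hom[OF x pq(2) g] qg rq by simp
  have rS: "r \<in> S0" "p \<in> S0" using x y by (simp_all add: r_def p_def)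
  have rr: "r \<cdot> r = r" unfolding r_def by (rule xiv_idem) (simp add: x y)
  have pp: "p \<cdot> p = p" unfolding p_def by (rule xiv_idem) (simp add: x y)
  have rp: "r \<odot> p = r" using agree[OF rS(1) rr rS(2) pp] p_r(2)[OF x y, folded p_def r_def] by simp
  have re: "r \<odot> e = r"
  proof -
    have "r \<odot> e = (r \<odot> p) \<odot> e" using rp by simp
    also have "\<dots> = r \<odot> (p \<odot> e)" using pq rI e by simp
    also have "\<dots> = r" using pe rp by simp
    finally show ?thesis .
  qed
  have "(e \<odot> act x g) \<odot> r = e \<odot> act x g" using 1 e ag pq rI by simp
  moreover have "r \<odot> (e \<odot> act x g) = r"
  proof -
    have "r \<odot> (e \<odot> act x g) = (r \<odot> e) \<odot> act x g" using e ag pq rI by simp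
    thus ?thesis using re 2 by simp
  qed
  ultimately show ?thesis using x y e ag by (simp add: inW r_def)
qed

lemma W_sg: "semigroup_on W mW"
proof -
  have c: "\<forall>a\<in>W. \<forall>b\<in>W. mW a b \<in> W" using W_closed by auto
  have "mW (mW a b) c = mW a (mW b c)" if "a \<in> W" "b \<in> W" "c \<in> W" for a b c
  proof -
    obtain e x g y h z where abc: "a = (e, x)" "b = (g, y)" "c = (h, z)" by (cases a, cases b, cases c) auto
    have x: "x \<in> S0" "e \<in> I" and y: "y \<in> S0" "g \<in> I" and z: "z \<in> S0" "h \<in> I"
      using that abc by (simp_all add: inW)
    have "act x (g \<odot> act y h) = act x g \<odot> act (x \<cdot> y) h"
      using act_hom[of x g "act y h"] act_comp[of x y h] x y z by simp
    thus ?thesis using abc x y z by simp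
  qed
  with c show ?thesis by (simp add: semigroup_on_def)
qed

lemma act_pp: "x \<in> S0 \<Longrightarrow> act x (iv x \<cdot> x) = x \<cdot> iv x"
  using cond1[of x "iv x"] by (simp add: iv_idem)

lemma act_ivx: assumes "(e, x) \<in> W" shows "act (iv x) e = iv x \<cdot> x"
proof -
  have x: "x \<in> S0" "e \<in> I" "(x \<cdot> iv x) \<odot> e = x \<cdot> iv x" using assms by (simp_all add: inW)
  have "act (iv x) e = act (iv x \<cdot> (x \<cdot> iv x)) e" using x by simp
  also have "\<dots> = act (iv x) (act (x \<cdot> iv x) e)" by (rule act_comp) (simp_all add: x)
  also have "\<dots> = act (iv x) (x \<cdot> iv x)" using cond2 x by simp
  also have "\<dots> = (iv x \<cdot> x) \<cdot> iv (iv x \<cdot> x)" by (rule cond1) (simp_all add: x)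
  also have "\<dots> = iv x \<cdot> x" using x by (simp add: iv_idem)
  finally show ?thesis .
qed

lemma winv_in: "(e, x) \<in> W \<Longrightarrow> (iv x \<cdot> x, iv x) \<in> W"
  by (simp add: inW)

lemma w_winv: "(e, x) \<in> W \<Longrightarrow> mW (e, x) (iv x \<cdot> x, iv x) = (e, x \<cdot> iv x)"
  by (simp add: inW act_pp del: assoc)

lemma winv_w: "(e, x) \<in> W \<Longrightarrow> mW (iv x \<cdot> x, iv x) (e, x) = (iv x \<cdot> x, iv x \<cdot> x)"
  using act_ivx[of e x] by (simp add: inW del: assoc)

lemma winv_inverse: assumes w: "(e, x) \<in> W" shows "(iv x \<cdot> x, iv x) \<in> inverses W mW (e, x)"
proof -
  have x: "x \<in> S0" "e \<in> I" "(x \<cdot> iv x) \<odot> e = x \<cdot> iv x" "e \<odot> (x \<cdot> iv x) = e"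
    using w by (simp_all add: inW)
  have pp: "(x \<cdot> iv x) \<cdot> (x \<cdot> iv x) = x \<cdot> iv x" using x(1) by (rule xiv_idem)
  have "mW (mW (e, x) (iv x \<cdot> x, iv x)) (e, x) = (e, x)"
    using w_winv[OF w] act_E0[OF _ pp, of e] x by (simp add: iv1' iv2' del: assoc)
  moreover have "mW (mW (iv x \<cdot> x, iv x) (e, x)) (iv x \<cdot> x, iv x) = (iv x \<cdot> x, iv x)"
    using winv_w[OF w] act_E0[OF _ ivx_idem, of x "iv x \<cdot> x"] x by (simp add: iv1' iv2' del: assoc)
  ultimately show ?thesis using winv_in[OF w] by (simp add: inverses_def)
qed

lemma W_regular: "regular_sg W mW"
proof -
  have "inverses W mW w \<noteq> {}" if "w \<in> W" for w
    using winv_inverse[of "fst w" "snd w"] that by (cases w) auto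
  thus ?thesis using W_sg by (simp add: regular_sg_def)
qed

lemma W_idem: assumes "(g, f) \<in> W" "mW (g, f) (g, f) = (g, f)"
  shows "f \<cdot> f = f" "iv f = f" "f \<in> S0" "g \<in> I" "g \<odot> f = g" "f \<odot> g = f"
proof -
  show f: "f \<cdot> f = f" using assms(2) by simp
  show fS: "f \<in> S0" "g \<in> I" using assms(1) by (simp_all add: inW)
  show "iv f = f" using iv_idem f fS by simp
  thus "g \<odot> f = g" "f \<odot> g = f" using assms(1) f by (simp_all add: inW)
qed

lemma W_idem_eq:
  assumes a: "(g, f) \<in> W" "mW (g, f) (g, f) = (g, f)"
    and b: "(g', f') \<in> W" "mW (g', f') (g', f') = (g', f')"
    and ab: "mW (g, f) (g', f') = (g', f')" and ba: "mW (g', f') (g, f) = (g, f)"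
  shows "(g, f) = (g', f')"
proof -
  note A = W_idem[OF a] and B = W_idem[OF b]
  have 1: "f \<cdot> f' = f'" "g \<odot> (f \<odot> g') = g'" using ab act_E0 A B by simp_all
  have 2: "f' \<cdot> f = f" "g' \<odot> (f' \<odot> g) = g" using ba act_E0 A B by simp_all
  have "f = f'" using 1 2 idem_comm[of f f'] A B by simp
  have gg': "g \<odot> g' = g'"
  proof -
    have "g \<odot> g' = (g \<odot> f) \<odot> g'" using A(5) by simp
    also have "\<dots> = g \<odot> (f \<odot> g')" by (rule Iassoc) (use A B E0I in simp_all)
    finally show ?thesis using 1(2) by simp
  qed
  have g'g: "g' \<odot> g = g"
  proof -
    have "g' \<odot> g = (g' \<odot> f') \<odot> g" using B(5) by simp
    also have "\<dots> = g' \<odot> (f' \<odot> g)" by (rule Iassoc) (use A B E0I in simp_all)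
    finally show ?thesis using 2(2) by simp
  qed
  have "g = (g \<odot> g') \<odot> g" using gg' g'g by simp
  also have "\<dots> = g \<odot> g'" using lrb1[of g g'] A B by simp
  finally have "g = g'" using gg' by simp
  with \<open>f = f'\<close> show ?thesis by simp
qed

lemma W_left_inverse: "left_inverse_sg W mW"
proof -
  have "\<exists>!q. q \<in> idems W mW \<and> R_rel W mW w q" if w: "w \<in> W" for w
  proof -
    obtain e x where wex: "w = (e, x)" by (cases w)
    have x: "x \<in> S0" "e \<in> I" "(x \<cdot> iv x) \<odot> e = x \<cdot> iv x" "e \<odot> (x \<cdot> iv x) = e"
      using w wex by (simp_all add: inW)
    define p where "p = x \<cdot> iv x"
    have pp: "p \<cdot> p = p" unfolding p_def using x(1) by (rule xiv_idem)
    have pS: "p \<in> S0" using x p_def by simp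
    have ivp: "iv p = p" using iv_idem pp pS by simp
    have qW: "(e, p) \<in> W" using x pS ivp pp by (simp add: inW p_def[symmetric])
    have qid: "mW (e, p) (e, p) = (e, p)" using act_E0[OF pS pp, of e] x pp by (simp add: p_def[symmetric])
    have R: "R_rel W mW w (e, p)"
    proof -
      have "w = mW (e, p) w" using act_E0[OF pS pp, of e] x wex by (simp add: p_def)
      moreover have "(e, p) = mW w (iv x \<cdot> x, iv x)" using w_winv w wex p_def by simp
      ultimately show ?thesis using w qW winv_in[of e x] wex unfolding R_rel_def by blast
    qed
    show ?thesis
    proof (rule ex1I[of _ "(e, p)"])
      show "(e, p) \<in> idems W mW \<and> R_rel W mW w (e, p)" using qW qid R by (simp add: idems_def)
    next
      fix q assume q: "q \<in> idems W mW \<and> R_rel W mW w q"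
      obtain g f where qgf: "q = (g, f)" by (cases q)
      have qW': "(g, f) \<in> W" "mW (g, f) (g, f) = (g, f)" using q qgf by (simp_all add: idems_def)
      have "mW (e, p) (g, f) = (g, f) \<and> mW (g, f) (e, p) = (e, p)"
        using R_rel_idems[OF W_sg qW qW'(1) qid qW'(2) R] q qgf by simp
      thus "q = (e, p)" using W_idem_eq[OF qW' qW qid] qgf by simp
    qed
  qed
  thus ?thesis using W_regular by (simp add: left_inverse_sg_def)
qed

definition T0W where "T0W = (\<lambda>x. (x \<cdot> iv x, x)) ` S0"

lemma T0W_sub: "T0W \<subseteq> W"
  by (auto simp: T0W_def inW simp del: assoc)

lemma T0W_mult: assumes x: "x \<in> S0" and y: "y \<in> S0"
  shows "mW (x \<cdot> iv x, x) (y \<cdot> iv y, y) = ((x \<cdot> y) \<cdot> iv (x \<cdot> y), x \<cdot> y)"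
proof -
  have r: "act x (y \<cdot> iv y) = (x \<cdot> y) \<cdot> iv (x \<cdot> y)" using cond1 x y by blast
  have rr: "((x \<cdot> y) \<cdot> iv (x \<cdot> y)) \<cdot> ((x \<cdot> y) \<cdot> iv (x \<cdot> y)) = (x \<cdot> y) \<cdot> iv (x \<cdot> y)"
    by (rule xiv_idem) (simp add: x y)
  have pp: "(x \<cdot> iv x) \<cdot> (x \<cdot> iv x) = x \<cdot> iv x" using x by (rule xiv_idem)
  have "(x \<cdot> iv x) \<odot> ((x \<cdot> y) \<cdot> iv (x \<cdot> y)) = (x \<cdot> iv x) \<cdot> ((x \<cdot> y) \<cdot> iv (x \<cdot> y))"
    by (rule agree) (use x y pp rr in simp_all)
  also have "\<dots> = (x \<cdot> y) \<cdot> iv (x \<cdot> y)" using p_r(1)[OF x y] .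
  finally show ?thesis using r by (simp del: assoc)
qed

lemma snd_inv: assumes "(g, y) \<in> inverses A mW (e, x)" "x \<in> S0" "y \<in> S0"
  shows "y = iv x"
proof -
  have "(x \<cdot> y) \<cdot> x = x" "(y \<cdot> x) \<cdot> y = y" using assms(1) by (simp_all add: inverses_def)
  thus ?thesis using iv_unique[of x y] assms by simp
qed

lemma T0W_inv_sg: "inverse_sg T0W mW"
proof -
  have cl: "\<forall>a\<in>T0W. \<forall>b\<in>T0W. mW a b \<in> T0W"
    using T0W_mult by (auto simp: T0W_def simp del: assoc)
  have sg: "semigroup_on T0W mW" using cl W_sg T0W_sub unfolding semigroup_on_def by (meson subsetD)
  have "\<exists>!b. b \<in> inverses T0W mW a" if a: "a \<in> T0W" for a
  proof -
    obtain x where x: "x \<in> S0" "a = (x \<cdot> iv x, x)" using a by (auto simp: T0W_def)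
    have aW: "a \<in> W" using a T0W_sub by auto
    have bT: "(iv x \<cdot> x, iv x) \<in> T0W" using x(1) unfolding T0W_def
      by (intro image_eqI[of _ _ "iv x"]) simp_all
    have "(iv x \<cdot> x, iv x) \<in> inverses W mW a" using winv_inverse aW x by simp
    hence b: "(iv x \<cdot> x, iv x) \<in> inverses T0W mW a" using bT by (simp add: inverses_def)
    show ?thesis
    proof (rule ex1I[of _ "(iv x \<cdot> x, iv x)"])
      show "(iv x \<cdot> x, iv x) \<in> inverses T0W mW a" by (rule b)
    next
      fix c assume c: "c \<in> inverses T0W mW a"
      then obtain y where y: "y \<in> S0" "c = (y \<cdot> iv y, y)" by (auto simp: inverses_def T0W_def)
      have "y = iv x" using snd_inv[of "y \<cdot> iv y" y T0W "x \<cdot> iv x" x] c x y by simp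
      thus "c = (iv x \<cdot> x, iv x)" using y x by simp
    qed
  qed
  thus ?thesis using sg by (simp add: inverse_sg_def)
qed

lemma W_transversal_uniq: assumes w: "(e, x) \<in> W"
  shows "(iv x \<cdot> x, iv x) \<in> inverses W mW (e, x) \<inter> T0W"
    and "c \<in> inverses W mW (e, x) \<inter> T0W \<Longrightarrow> c = (iv x \<cdot> x, iv x)"
proof -
  have x: "x \<in> S0" using w by (simp add: inW)
  have bT: "(iv x \<cdot> x, iv x) \<in> T0W" using x unfolding T0W_def
    by (intro image_eqI[of _ _ "iv x"]) simp_all
  show "(iv x \<cdot> x, iv x) \<in> inverses W mW (e, x) \<inter> T0W" using winv_inverse[OF w] bT by simp
  assume c: "c \<in> inverses W mW (e, x) \<inter> T0W"
  then obtain y where y: "y \<in> S0" "c = (y \<cdot> iv y, y)" by (auto simp: T0W_def)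
  have "y = iv x" using snd_inv[of "y \<cdot> iv y" y W e x] c x y by simp
  thus "c = (iv x \<cdot> x, iv x)" using y x by simp
qed

lemma W_inv_transversal: "inverse_transversal W mW T0W"
proof -
  have "\<exists>!c. c \<in> inverses W mW w \<inter> T0W" if "w \<in> W" for w
    using W_transversal_uniq[of "fst w" "snd w"] that by (cases w) (simp, blast)
  thus ?thesis using W_regular T0W_sub T0W_inv_sg
    by (simp add: inverse_transversal_def inverse_subsg_def)
qed

lemma T0W_iso: "isomorphic T0W mW S0 mS"
proof -
  have "inj_on snd T0W" by (auto simp: T0W_def inj_on_def)
  moreover have "snd ` T0W = S0" by (force simp: T0W_def image_image)
  moreover have "\<forall>a\<in>T0W. \<forall>b\<in>T0W. snd (mW a b) = snd a \<cdot> snd b" by (simp add: W_mult_def)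
  ultimately show ?thesis unfolding isomorphic_def sg_iso_def bij_betw_def by blast
qed

lemma trans_inv_W: "(e, x) \<in> W \<Longrightarrow> trans_inv W mW T0W (e, x) = (iv x \<cdot> x, iv x)"
  unfolding trans_inv_def using W_transversal_uniq by (intro the_equality) blast+

lemma I_set_W: "I_set W mW T0W = {(e, x \<cdot> iv x) | e x. (e, x) \<in> W}"
proof -
  have "I_set W mW T0W = {mW w (trans_inv W mW T0W w) | w. w \<in> W}" by (simp add: I_set_def)
  also have "\<dots> = {(e, x \<cdot> iv x) | e x. (e, x) \<in> W}"
  proof (intro set_eqI iffI)
    fix z assume "z \<in> {mW w (trans_inv W mW T0W w) | w. w \<in> W}"
    then obtain e x where "(e, x) \<in> W" "z = mW (e, x) (trans_inv W mW T0W (e, x))" by auto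
    thus "z \<in> {(e, x \<cdot> iv x) | e x. (e, x) \<in> W}" using trans_inv_W w_winv by auto
  next
    fix z assume "z \<in> {(e, x \<cdot> iv x) | e x. (e, x) \<in> W}"
    then obtain e x where "(e, x) \<in> W" "z = (e, x \<cdot> iv x)" by auto
    hence "z = mW (e, x) (trans_inv W mW T0W (e, x))" using trans_inv_W w_winv by auto
    thus "z \<in> {mW w (trans_inv W mW T0W w) | w. w \<in> W}" using \<open>(e, x) \<in> W\<close> by blast
  qed
  finally show ?thesis .
qed

lemma I_iso: "isomorphic (I_set W mW T0W) mW I mI"
proof -
  have inj: "inj_on fst (I_set W mW T0W)"
  proof (rule inj_onI)
    fix a b assume a: "a \<in> I_set W mW T0W" and b: "b \<in> I_set W mW T0W" and ab: "fst a = fst b"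
    obtain e x where ex: "(e, x) \<in> W" "a = (e, x \<cdot> iv x)" using a I_set_W by auto
    obtain g y where gy: "(g, y) \<in> W" "b = (g, y \<cdot> iv y)" using b I_set_W by auto
    have eg: "e = g" using ab ex gy by simp
    have X: "x \<in> S0" "e \<in> I" "(x \<cdot> iv x) \<odot> e = x \<cdot> iv x" "e \<odot> (x \<cdot> iv x) = e"
      using ex by (simp_all add: inW)
    have Y: "y \<in> S0" "(y \<cdot> iv y) \<odot> e = y \<cdot> iv y" "e \<odot> (y \<cdot> iv y) = e"
      using gy eg by (simp_all add: inW)
    have inv1: "x \<cdot> iv x \<in> inverses I mI e \<inter> idems S0 mS"
      using X by (simp add: inverses_def idems_def del: assoc add: xiv_idem)
    have inv2: "y \<cdot> iv y \<in> inverses I mI e \<inter> idems S0 mS"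
      using X Y by (simp add: inverses_def idems_def del: assoc add: xiv_idem)
    have "\<exists>!z. z \<in> inverses I mI e \<inter> idems S0 mS" using st X(2)
      unfolding semilattice_transversal_def by blast
    hence "x \<cdot> iv x = y \<cdot> iv y" using inv1 inv2 by blast
    thus "a = b" using ex gy eg by simp
  qed
  have img: "fst ` I_set W mW T0W = I"
  proof (intro set_eqI iffI)
    fix e assume "e \<in> fst ` I_set W mW T0W"
    thus "e \<in> I" using I_set_W by (auto simp: inW)
  next
    fix e assume e: "e \<in> I"
    have "\<exists>!z. z \<in> inverses I mI e \<inter> idems S0 mS" using st e
      unfolding semilattice_transversal_def by blast
    then obtain f where f: "f \<in> inverses I mI e" "f \<in> S0" "f \<cdot> f = f"
      by (auto simp: idems_def)
    have fI: "f \<in> I" using f E0I by simp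
    have 1: "(e \<odot> f) \<odot> e = e" "(f \<odot> e) \<odot> f = f" using f(1) by (simp_all add: inverses_def del: Iassoc)
    have "e \<odot> f = e" using 1(1) lrb1[of e f] e fI by simp
    moreover have "f \<odot> e = f" using 1(2) lrb1[of f e] e fI by simp
    moreover have ivf: "iv f = f" using iv_idem f by simp
    ultimately have "(e, f) \<in> W" using e f by (simp add: inW)
    moreover have "f \<cdot> iv f = f" using ivf f by simp
    ultimately have "(e, f) \<in> I_set W mW T0W" using I_set_W by force
    thus "e \<in> fst ` I_set W mW T0W" by force
  qed
  have hom: "\<forall>a\<in>I_set W mW T0W. \<forall>b\<in>I_set W mW T0W. fst (mW a b) = fst a \<odot> fst b"
  proof (intro ballI)
    fix a b assume a: "a \<in> I_set W mW T0W" and b: "b \<in> I_set W mW T0W"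
    obtain e x where ex: "(e, x) \<in> W" "a = (e, x \<cdot> iv x)" using a I_set_W by auto
    obtain g y where gy: "(g, y) \<in> W" "b = (g, y \<cdot> iv y)" using b I_set_W by auto
    have X: "x \<in> S0" "e \<in> I" "e \<odot> (x \<cdot> iv x) = e" and g: "g \<in> I" using ex gy by (simp_all add: inW)
    have "act (x \<cdot> iv x) g = (x \<cdot> iv x) \<odot> g" using cond2 X g by blast
    hence "fst (mW a b) = e \<odot> ((x \<cdot> iv x) \<odot> g)" using ex gy X g by (simp del: assoc)
    also have "\<dots> = (e \<odot> (x \<cdot> iv x)) \<odot> g" by (rule Iassoc[symmetric]) (use X g in simp_all)
    also have "\<dots> = e \<odot> g" using X(3) by simp
    finally show "fst (mW a b) = fst a \<odot> fst b" using ex gy by simp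
  qed
  show ?thesis using inj img hom unfolding isomorphic_def sg_iso_def bij_betw_def by blast
qed

theorem part1:
  "left_inverse_sg W mW \<and> (\<exists>T0. inverse_transversal W mW T0 \<and> isomorphic T0 mW S0 mS \<and>
      isomorphic (I_set W mW T0) mW I mI)"
  using W_left_inverse W_inv_transversal T0W_iso I_iso by blast

end
locale ltdata =
  fixes T :: "'b set" and mT :: "'b \<Rightarrow> 'b \<Rightarrow> 'b" (infixl "\<cdot>" 70) and T0 :: "'b set"
  assumes li: "left_inverse_sg T mT" and itr: "inverse_transversal T mT T0"
begin

sublocale isg T0 mT using itr by unfold_locales (simp add: inverse_transversal_def inverse_subsg_def)

lemma T0T[simp]: "x \<in> T0 \<Longrightarrow> x \<in> T"
  using itr by (auto simp: inverse_transversal_def inverse_subsg_def)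
lemma sgT: "semigroup_on T mT" using li by (simp add: left_inverse_sg_def regular_sg_def)
lemma Tclosed[simp]: "x \<in> T \<Longrightarrow> y \<in> T \<Longrightarrow> x \<cdot> y \<in> T"
  using sgT by (simp add: semigroup_on_def)
lemma Tassoc[simp]: "x \<in> T \<Longrightarrow> y \<in> T \<Longrightarrow> z \<in> T \<Longrightarrow> (x \<cdot> y) \<cdot> z = x \<cdot> (y \<cdot> z)"
  using sgT by (simp add: semigroup_on_def)
lemma Tidemz[simp]: "e \<in> T \<Longrightarrow> e \<cdot> e = e \<Longrightarrow> z \<in> T \<Longrightarrow> e \<cdot> (e \<cdot> z) = e \<cdot> z"
  by (metis Tassoc)
lemma iv1T[simp]: assumes "x \<in> T0" "z \<in> T" shows "x \<cdot> (iv x \<cdot> (x \<cdot> z)) = x \<cdot> z"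
proof -
  have "x \<cdot> (iv x \<cdot> (x \<cdot> z)) = (x \<cdot> (iv x \<cdot> x)) \<cdot> z" using assms by (simp del: iv1)
  also have "\<dots> = x \<cdot> z" using assms by simp
  finally show ?thesis .
qed
lemma iv2T[simp]: assumes "x \<in> T0" "z \<in> T" shows "iv x \<cdot> (x \<cdot> (iv x \<cdot> z)) = iv x \<cdot> z"
proof -
  have "iv x \<cdot> (x \<cdot> (iv x \<cdot> z)) = (iv x \<cdot> (x \<cdot> iv x)) \<cdot> z" using assms by (simp del: iv2)
  also have "\<dots> = iv x \<cdot> z" using assms by simp
  finally show ?thesis .
qed

abbreviation t0 where "t0 x \<equiv> trans_inv T mT T0 x"

lemma t0_prop: "x \<in> T \<Longrightarrow> t0 x \<in> inverses T mT x \<inter> T0"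
  using itr unfolding inverse_transversal_def trans_inv_def by (metis theI')
lemma t0_in[simp]: "x \<in> T \<Longrightarrow> t0 x \<in> T0"
  using t0_prop by blast
lemma t0_1[simp]: "x \<in> T \<Longrightarrow> x \<cdot> (t0 x \<cdot> x) = x"
  using t0_prop[of x] by (simp add: inverses_def)
lemma t0_2[simp]: "x \<in> T \<Longrightarrow> t0 x \<cdot> (x \<cdot> t0 x) = t0 x"
  using t0_prop[of x] by (simp add: inverses_def)
lemma t0_unique: assumes "x \<in> T" "y \<in> T0" "x \<cdot> (y \<cdot> x) = x" "y \<cdot> (x \<cdot> y) = y"
  shows "y = t0 x"
proof -
  have "y \<in> inverses T mT x \<inter> T0" using assms by (simp add: inverses_def)
  moreover have "t0 x \<in> inverses T mT x \<inter> T0" using t0_prop assms by simp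
  moreover have "\<exists>!y. y \<in> inverses T mT x \<inter> T0" using itr assms(1) unfolding inverse_transversal_def by simp
  ultimately show ?thesis by (metis (no_types))
qed

lemma Req: assumes "e \<in> T" "f \<in> T" "e \<cdot> e = e" "f \<cdot> f = f" "f \<cdot> e = e" "e \<cdot> f = f"
  shows "e = f"
proof -
  have "R_rel T mT e e" using assms by (simp add: R_rel_def)
  moreover have "R_rel T mT e f" using assms unfolding R_rel_def by metis
  moreover have "\<exists>!q. q \<in> idems T mT \<and> R_rel T mT e q" using li assms(1) by (simp add: left_inverse_sg_def)
  ultimately show ?thesis using assms by (auto simp: idems_def)
qed

lemma E_closed: assumes e: "e \<in> T" "e \<cdot> e = e" and f: "f \<in> T" "f \<cdot> f = f"
  shows "(e \<cdot> f) \<cdot> (e \<cdot> f) = e \<cdot> f"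
proof -
  define a where "a = t0 (e \<cdot> f)"
  have aT: "a \<in> T" using e f a_def by simp
  have A1: "e \<cdot> (f \<cdot> (a \<cdot> (e \<cdot> f))) = e \<cdot> f"
    using t0_1[of "e \<cdot> f"] e f unfolding a_def[symmetric] by (simp del: t0_1 add: aT)
  have A2: "a \<cdot> (e \<cdot> (f \<cdot> a)) = a"
    using t0_2[of "e \<cdot> f"] e f unfolding a_def[symmetric] by (simp del: t0_2 add: aT)
  have A2z: "a \<cdot> (e \<cdot> (f \<cdot> (a \<cdot> z))) = a \<cdot> z" if "z \<in> T" for z
  proof -
    have "a \<cdot> (e \<cdot> (f \<cdot> (a \<cdot> z))) = (a \<cdot> (e \<cdot> (f \<cdot> a))) \<cdot> z" using aT e f that by simp
    thus ?thesis using A2 by simp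
  qed
  define g where "g = f \<cdot> (a \<cdot> e)"
  have gT: "g \<in> T" using aT e f g_def by simp
  have gg: "g \<cdot> g = g" using A2z e f aT by (simp add: g_def)
  have g2: "g \<cdot> ((e \<cdot> f) \<cdot> g) = g" using A2z e f aT by (simp add: g_def)
  have g1: "(e \<cdot> f) \<cdot> (g \<cdot> (e \<cdot> f)) = e \<cdot> f" using A1 e f aT by (simp add: g_def)
  define h where "h = g \<cdot> (e \<cdot> f)"
  have hT: "h \<in> T" using gT e f h_def by simp
  have hg: "h \<cdot> g = g" using g2 gT e f by (simp add: h_def)
  have gh: "g \<cdot> h = h" using gg gT e f by (simp add: h_def)
  have hh: "h \<cdot> h = h"
  proof -
    have "h \<cdot> h = (h \<cdot> g) \<cdot> (e \<cdot> f)" using gT e f hT by (simp add: h_def)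
    thus ?thesis using hg h_def by simp
  qed
  have "g = h" using Req[OF gT hT gg hh hg gh] .
  have efg: "e \<cdot> f = (e \<cdot> f) \<cdot> g"
  proof -
    have "e \<cdot> f = (e \<cdot> f) \<cdot> (g \<cdot> (e \<cdot> f))" using g1 by simp
    also have "\<dots> = (e \<cdot> f) \<cdot> h" by (simp add: h_def)
    finally show ?thesis using \<open>g = h\<close> by simp
  qed
  have "((e \<cdot> f) \<cdot> g) \<cdot> ((e \<cdot> f) \<cdot> g) = (e \<cdot> f) \<cdot> (g \<cdot> ((e \<cdot> f) \<cdot> g))" using gT e f by simp
  also have "\<dots> = (e \<cdot> f) \<cdot> g" using g2 by simp
  finally show ?thesis using efg by simp
qed

lemma E_lrb: assumes e: "e \<in> T" "e \<cdot> e = e" and f: "f \<in> T" "f \<cdot> f = f"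
  shows "e \<cdot> (f \<cdot> e) = e \<cdot> f"
proof -
  have ef: "(e \<cdot> f) \<cdot> (e \<cdot> f) = e \<cdot> f" using E_closed e f .
  have efe: "((e \<cdot> f) \<cdot> e) \<cdot> ((e \<cdot> f) \<cdot> e) = (e \<cdot> f) \<cdot> e" using E_closed[of "e \<cdot> f" e] ef e f by simp
  have 1: "((e \<cdot> f) \<cdot> e) \<cdot> (e \<cdot> f) = e \<cdot> f"
  proof -
    have "((e \<cdot> f) \<cdot> e) \<cdot> (e \<cdot> f) = (e \<cdot> f) \<cdot> (e \<cdot> f)" using e f by simp
    thus ?thesis using ef by simp
  qed
  have 2: "(e \<cdot> f) \<cdot> ((e \<cdot> f) \<cdot> e) = (e \<cdot> f) \<cdot> e"
  proof -
    have "(e \<cdot> f) \<cdot> ((e \<cdot> f) \<cdot> e) = ((e \<cdot> f) \<cdot> (e \<cdot> f)) \<cdot> e" using e f by simp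
    thus ?thesis using ef by simp
  qed
  have "e \<cdot> f = (e \<cdot> f) \<cdot> e" by (rule Req) (use e f ef efe 1 2 in simp_all)
  thus ?thesis using e f by simp
qed

lemma E_lrbz: assumes "e \<in> T" "e \<cdot> e = e" "f \<in> T" "f \<cdot> f = f" "z \<in> T"
  shows "e \<cdot> (f \<cdot> (e \<cdot> z)) = e \<cdot> (f \<cdot> z)"
proof -
  have "(e \<cdot> (f \<cdot> e)) \<cdot> z = (e \<cdot> f) \<cdot> z" using E_lrb assms by simp
  thus ?thesis using assms by simp
qed

lemma lrbh: assumes x: "x \<in> T0" and e: "e \<in> T" "e \<cdot> e = e" and z: "z \<in> T"
  shows "iv x \<cdot> (x \<cdot> (e \<cdot> (iv x \<cdot> (x \<cdot> z)))) = iv x \<cdot> (x \<cdot> (e \<cdot> z))"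
  using E_lrbz[of "iv x \<cdot> x" e z] x e z by simp

lemma lrbx: assumes x: "x \<in> T0" and e: "e \<in> T" "e \<cdot> e = e" and z: "z \<in> T"
  shows "e \<cdot> (iv x \<cdot> (x \<cdot> (e \<cdot> z))) = e \<cdot> (iv x \<cdot> (x \<cdot> z))"
  using E_lrbz[of e "iv x \<cdot> x" z] x e z by simp

lemma xeh: assumes x: "x \<in> T0" and e: "e \<in> T" "e \<cdot> e = e" and z: "z \<in> T"
  shows "x \<cdot> (e \<cdot> (iv x \<cdot> (x \<cdot> z))) = x \<cdot> (e \<cdot> z)"
proof -
  have "x \<cdot> (e \<cdot> (iv x \<cdot> (x \<cdot> z))) = x \<cdot> (iv x \<cdot> (x \<cdot> (e \<cdot> (iv x \<cdot> (x \<cdot> z)))))"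
    using x e z by (simp del: lrbh)
  also have "\<dots> = x \<cdot> (iv x \<cdot> (x \<cdot> (e \<cdot> z)))" using lrbh x e z by simp
  also have "\<dots> = x \<cdot> (e \<cdot> z)" using x e z by simp
  finally show ?thesis .
qed

abbreviation E where "E \<equiv> idems T mT"
definition actT where "actT x e = (x \<cdot> e) \<cdot> sg_inv T0 mT x"

lemma inE: "e \<in> E \<longleftrightarrow> e \<in> T \<and> e \<cdot> e = e" by (simp add: idems_def)

lemma e_t0: assumes "e \<in> T" "e \<cdot> e = e" shows "e \<cdot> t0 e = e" "t0 e \<cdot> t0 e = t0 e" "t0 e \<cdot> e = t0 e"
proof -
  have "e = e \<cdot> t0 e"
    by (rule Req) (use assms in simp_all)
  thus 1: "e \<cdot> t0 e = e" by simp
  show te: "t0 e \<cdot> e = t0 e" using t0_2[of e] 1 assms by simp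
  have "t0 e \<cdot> t0 e = (t0 e \<cdot> e) \<cdot> t0 e" by (simp only: te)
  also have "\<dots> = t0 e \<cdot> (e \<cdot> t0 e)" by (rule Tassoc) (simp_all add: assms)
  also have "\<dots> = t0 e" using t0_2 assms by simp
  finally show "t0 e \<cdot> t0 e = t0 e" .
qed

lemma sgE: "semigroup_on E mT"
  using E_closed by (auto simp: semigroup_on_def idems_def)

lemma lrbE: "left_regular_band E mT"
  using sgE E_lrb by (auto simp: left_regular_band_def idems_def)

lemma stE: "semilattice_transversal (idems T0 mT) E mT"
proof -
  have "\<exists>!y. y \<in> inverses E mT x \<inter> idems T0 mT" if x: "x \<in> E" for x
  proof (rule ex1I[of _ "t0 x"])
    have xT: "x \<in> T" "x \<cdot> x = x" using x by (simp_all add: idems_def)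
    show "t0 x \<in> inverses E mT x \<inter> idems T0 mT"
      using e_t0[OF xT] xT x by (simp add: inverses_def idems_def)
    fix y assume "y \<in> inverses E mT x \<inter> idems T0 mT"
    thus "y = t0 x" using t0_unique[of x y] xT by (auto simp: inverses_def idems_def)
  qed
  moreover have "idems T0 mT \<subseteq> E" by (auto simp: idems_def)
  moreover have "\<forall>e\<in>idems T0 mT. \<forall>f\<in>idems T0 mT. e \<cdot> f \<in> idems T0 mT"
    using idem_mult by (simp add: idems_def)
  moreover have "\<forall>e\<in>idems T0 mT. \<forall>f\<in>idems T0 mT. e \<cdot> f = f \<cdot> e"
    using idem_comm by (simp add: idems_def)
  ultimately show ?thesis by (auto simp: semilattice_transversal_def idems_def)
qed

lemma cdT: "construction_data T0 mT E mT actT"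
proof -
  have 1: "\<forall>x\<in>T0. \<forall>e\<in>E. actT x e \<in> E"
  proof (intro ballI)
    fix x e assume x: "x \<in> T0" and e: "e \<in> E"
    have eT: "e \<in> T" "e \<cdot> e = e" using e by (simp_all add: idems_def)
    have "x \<cdot> (e \<cdot> (iv x \<cdot> (x \<cdot> (e \<cdot> iv x)))) = x \<cdot> (e \<cdot> iv x)"
      using lrbx[OF x eT, of "iv x"] x eT by simp
    thus "actT x e \<in> E" using x eT by (simp add: actT_def idems_def)
  qed
  have 2: "\<forall>x\<in>T0. \<forall>y\<in>T0. \<forall>e\<in>E. actT (x \<cdot> y) e = actT x (actT y e)"
    by (simp add: actT_def iv_mult idems_def)
  have 3: "\<forall>x\<in>T0. \<forall>e\<in>E. \<forall>f\<in>E. actT x (e \<cdot> f) = actT x e \<cdot> actT x f"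
    using xeh by (simp add: actT_def idems_def)
  have 4: "\<forall>x\<in>T0. \<forall>y\<in>T0. actT x (y \<cdot> iv y) = (x \<cdot> y) \<cdot> iv (x \<cdot> y)"
    by (simp add: actT_def iv_mult)
  have 5: "\<forall>x\<in>T0. \<forall>e\<in>E. actT (x \<cdot> iv x) e = (x \<cdot> iv x) \<cdot> e"
  proof (intro ballI)
    fix x e assume x: "x \<in> T0" and e: "e \<in> E"
    have eT: "e \<in> T" "e \<cdot> e = e" using e by (simp_all add: idems_def)
    have "iv (x \<cdot> iv x) = x \<cdot> iv x" using iv_idem x by simp
    moreover have "(x \<cdot> iv x) \<cdot> (e \<cdot> (x \<cdot> iv x)) = (x \<cdot> iv x) \<cdot> e"
      by (rule E_lrb) (use x eT in simp_all)
    ultimately show "actT (x \<cdot> iv x) e = (x \<cdot> iv x) \<cdot> e" using x eT by (simp add: actT_def)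
  qed
  show ?thesis unfolding construction_data_def
    using inv lrbE stE 1 2 3 4 5 by simp
qed

abbreviation WT where "WT \<equiv> W_set T0 mT E mT"
abbreviation mWT where "mWT \<equiv> W_mult mT mT actT"

lemma inWT: "(e, x) \<in> WT \<longleftrightarrow> x \<in> T0 \<and> e \<in> T \<and> e \<cdot> e = e \<and> e \<cdot> (x \<cdot> iv x) = e \<and> (x \<cdot> iv x) \<cdot> e = x \<cdot> iv x"
proof -
  have "x \<in> T0 \<Longrightarrow> e \<in> E \<Longrightarrow> L_rel E mT e (x \<cdot> iv x) \<longleftrightarrow> e \<cdot> (x \<cdot> iv x) = e \<and> (x \<cdot> iv x) \<cdot> e = x \<cdot> iv x"
    using L_rel_idem[OF sgE, of e "x \<cdot> iv x"] by (simp add: idems_def)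
  thus ?thesis by (auto simp: W_set_def L_class_def idems_def)
qed

lemma WT_t0: assumes w: "(e, x) \<in> WT" shows "iv x = t0 (e \<cdot> x)"
proof -
  have X: "x \<in> T0" "e \<in> T" "e \<cdot> e = e" "e \<cdot> (x \<cdot> iv x) = e" "(x \<cdot> iv x) \<cdot> e = x \<cdot> iv x"
    using w by (simp_all add: inWT)
  have pez: "x \<cdot> (iv x \<cdot> (e \<cdot> z)) = x \<cdot> (iv x \<cdot> z)" if "z \<in> T" for z
  proof -
    have X5: "(x \<cdot> iv x) \<cdot> e = x \<cdot> iv x" using w unfolding inWT by blast
    have "((x \<cdot> iv x) \<cdot> e) \<cdot> z = (x \<cdot> iv x) \<cdot> z" by (simp only: X5)
    thus ?thesis using X(1,2) that by simp
  qed
  have epz: "e \<cdot> (x \<cdot> (iv x \<cdot> z)) = e \<cdot> z" if "z \<in> T" for z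
  proof -
    have "(e \<cdot> (x \<cdot> iv x)) \<cdot> z = e \<cdot> z" by (simp only: X(4))
    thus ?thesis using X(1,2) that by simp
  qed
  have "(e \<cdot> x) \<cdot> (iv x \<cdot> (e \<cdot> x)) = e \<cdot> x" using pez[of x] X by simp
  moreover have "iv x \<cdot> ((e \<cdot> x) \<cdot> iv x) = iv x"
  proof -
    have "iv x \<cdot> ((e \<cdot> x) \<cdot> iv x) = iv x \<cdot> e" using X by simp
    also have "\<dots> = iv x \<cdot> (x \<cdot> (iv x \<cdot> e))" using X(1,2) by simp
    also have "\<dots> = iv x" using X by simp
    finally show ?thesis .
  qed
  ultimately show ?thesis using t0_unique[of "e \<cdot> x" "iv x"] X by simp
qed

lemma WT_iso: "isomorphic WT mWT T mT"
proof -
  let ?phi = "\<lambda>p. fst p \<cdot> snd p"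
  have inj: "inj_on ?phi WT"
  proof (rule inj_onI)
    fix a b assume a: "a \<in> WT" and b: "b \<in> WT" and ab: "?phi a = ?phi b"
    obtain e x where ex: "a = (e, x)" by (cases a)
    obtain g y where gy: "b = (g, y)" by (cases b)
    have A: "x \<in> T0" "e \<in> T" "e \<cdot> (x \<cdot> iv x) = e" using a ex by (simp_all add: inWT)
    have B: "y \<in> T0" "g \<in> T" "g \<cdot> (y \<cdot> iv y) = g" using b gy by (simp_all add: inWT)
    have "iv x = iv y" using WT_t0 a b ab ex gy by simp
    hence xy: "x = y" using A B by (metis iv_iv)
    have "e = (e \<cdot> x) \<cdot> iv x" using A by simp
    also have "\<dots> = (g \<cdot> y) \<cdot> iv y" using ab ex gy xy by simp
    also have "\<dots> = g" using B by simp
    finally show "a = b" using ex gy xy by simp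
  qed
  have img: "?phi ` WT = T"
  proof (intro set_eqI iffI)
    fix t assume "t \<in> ?phi ` WT"
    thus "t \<in> T" by (auto simp: inWT)
  next
    fix t assume t: "t \<in> T"
    define u where "u = t0 t"
    have u: "u \<in> T0" using t u_def by simp
    have ut: "u \<cdot> (t \<cdot> u) = u" "t \<cdot> (u \<cdot> t) = t" using t by (simp_all add: u_def)
    have utz: "u \<cdot> (t \<cdot> (u \<cdot> z)) = u \<cdot> z" if "z \<in> T" for z
    proof -
      have "(u \<cdot> (t \<cdot> u)) \<cdot> z = u \<cdot> z" by (simp only: ut(1))
      thus ?thesis using u t that by simp
    qed
    define x where "x = iv u"
    have x: "x \<in> T0" "iv x = u" using u by (simp_all add: x_def)
    have eW: "(t \<cdot> u, x) \<in> WT"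
      using x u t ut utz[of "iv u"] by (simp add: inWT x_def)
    have "u \<cdot> t = u \<cdot> x"
    proof (rule Req)
      show "(u \<cdot> x) \<cdot> (u \<cdot> t) = u \<cdot> t" using u t x_def by simp
      show "(u \<cdot> t) \<cdot> (u \<cdot> x) = u \<cdot> x" using u t utz[of x] x_def by simp
    qed (use u t ut x_def in simp_all)
    hence "t = (t \<cdot> u) \<cdot> x" using ut u t x by (metis Tassoc T0T)
    thus "t \<in> ?phi ` WT" using eW by force
  qed
  have hom: "\<forall>a\<in>WT. \<forall>b\<in>WT. ?phi (mWT a b) = ?phi a \<cdot> ?phi b"
  proof (intro ballI)
    fix a b assume a: "a \<in> WT" and b: "b \<in> WT"
    obtain e x where ex: "a = (e, x)" by (cases a)
    obtain g y where gy: "b = (g, y)" by (cases b)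
    have A: "x \<in> T0" "e \<in> T" using a ex by (simp_all add: inWT)
    have B: "y \<in> T0" "g \<in> T" "g \<cdot> g = g" using b gy by (simp_all add: inWT)
    show "?phi (mWT a b) = ?phi a \<cdot> ?phi b"
      using xeh[of x g y] A B ex gy by (simp add: W_mult_def actT_def)
  qed
  show ?thesis using inj img hom unfolding isomorphic_def sg_iso_def bij_betw_def by blast
qed

end
theorem corollary4p3:
  fixes S0 I :: "'a set" and mS mI act :: "'a \<Rightarrow> 'a \<Rightarrow> 'a"
  shows "(construction_data S0 mS I mI act \<longrightarrow>
            left_inverse_sg (W_set S0 mS I mI) (W_mult mS mI act) \<and>
            (\<exists>T0. inverse_transversal (W_set S0 mS I mI) (W_mult mS mI act) T0 \<and>
                  isomorphic T0 (W_mult mS mI act) S0 mS \<and>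
                  isomorphic (I_set (W_set S0 mS I mI) (W_mult mS mI act) T0)
                             (W_mult mS mI act) I mI)) \<and>
         (\<forall>(T :: 'b set) (mT :: 'b \<Rightarrow> 'b \<Rightarrow> 'b) T0.
            left_inverse_sg T mT \<and> inverse_transversal T mT T0 \<longrightarrow>
            (\<exists>(S0' :: 'b set) mS' I' mI' act'.
               construction_data S0' mS' I' mI' act' \<and>
               isomorphic (W_set S0' mS' I' mI') (W_mult mS' mI' act') T mT))"
proof (rule conjI; (intro impI allI)?)
  assume "construction_data S0 mS I mI act"
  then interpret cdata S0 mS I mI act by unfold_locales
  show "left_inverse_sg (W_set S0 mS I mI) (W_mult mS mI act) \<and>
            (\<exists>T0. inverse_transversal (W_set S0 mS I mI) (W_mult mS mI act) T0 \<and>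
                  isomorphic T0 (W_mult mS mI act) S0 mS \<and>
                  isomorphic (I_set (W_set S0 mS I mI) (W_mult mS mI act) T0)
                             (W_mult mS mI act) I mI)" by (rule part1)
next
  fix T :: "'b set" and mT T0
  assume "left_inverse_sg T mT \<and> inverse_transversal T mT T0"
  then interpret ltdata T mT T0 by unfold_locales auto
  show "\<exists>(S0' :: 'b set) mS' I' mI' act'.
               construction_data S0' mS' I' mI' act' \<and>
               isomorphic (W_set S0' mS' I' mI') (W_mult mS' mI' act') T mT"
    using cdT WT_iso by blast
qed

end
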